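(* Let $d\ge 1$ and let $F,G$ be holomorphic functions on $\mathbb{C}^d$, neither identically zero. Assume there are functions $\varphi_1,\ldots,\varphi_d:\mathbb{R}^{d-1}\to\mathbb{T}$ such that for every $j\in\{1,\ldots,d\}$ and every $x\in\mathbb{R}^d$, $F(x)=\varphi_j(x^{(j)})G(x)$. Then there exists $c\in\mathbb{T}$ such that $F=cG$ on $\mathbb{C}^d$.
   Context: $\mathbb{T}=\{z\in\mathbb{C}:|z|=1\}$. For $x=(x_1,\ldots,x_d)\in\mathbb{R}^d$ and $j\in\{1,\ldots,d\}$, $x^{(j)}=(x_1,\ldots,x_{j-1},x_{j+1},\ldots,x_d)\in\mathbb{R}^{d-1}$. *)

theory Defs
  imports "HOL-Analysis.Analysis"
begin

definition entire_several :: "(complex ^ 'd \<Rightarrow> complex) \<Rightarrow> bool" where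
  "entire_several F \<longleftrightarrow>
     (\<forall>z. \<exists>D. (F has_derivative D) (at z) \<and> (\<forall>(c::complex) v. D (c *s v) = c * D v))"

definition circle_T :: "complex set" where
  "circle_T = {z. norm z = 1}"

text \<open>x^(j): the vector in R^(d-1) obtained by deleting the j-th coordinate, coordinates
  listed in increasing index order.\<close>
definition delete_coord :: "real ^ ('d::{finite,linorder}) \<Rightarrow> 'd \<Rightarrow> real list" where
  "delete_coord x j = map (\<lambda>i. x $ i) (sorted_list_of_set (UNIV - {j}))"

definition cvec :: "real ^ 'd \<Rightarrow> complex ^ 'd" where
  "cvec x = (\<chi> i. complex_of_real (x $ i))"

end

theory Submission
  imports Defs "HOL-Complex_Analysis.Complex_Analysis"
begin

definition upd :: "complex ^ 'd \<Rightarrow> 'd \<Rightarrow> complex \<Rightarrow> complex ^ 'd" where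
  "upd z k t = (\<chi> i. if i = k then t else z $ i)"

lemma upd_deriv:
  fixes z :: "complex ^ 'd::finite"
  shows "((\<lambda>t. upd z k t) has_derivative (\<lambda>h. h *s axis k 1)) (at t)"
proof -
  have eq: "(\<lambda>t. upd z k t) = (\<lambda>t. t *s axis k 1 + (\<chi> i. if i = k then 0 else z $ i))"
    by (auto simp: upd_def vec_eq_iff axis_def)
  have lin: "linear (\<lambda>h::complex. h *s (axis k 1 :: complex ^ 'd))"
    by (auto simp: linear_iff vec_eq_iff axis_def algebra_simps)
  have bl: "bounded_linear (\<lambda>h::complex. h *s (axis k 1 :: complex ^ 'd))"
    using lin linear_conv_bounded_linear by blast
  show ?thesis unfolding eq
    by (rule has_derivative_add_const[OF bounded_linear.has_derivative[OF bl has_derivative_ident]])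
qed

lemma slice_holo:
  assumes "entire_several H"
  shows "(\<lambda>t. H (upd z k t)) holomorphic_on UNIV"
proof -
  have "(\<lambda>t. H (upd z k t)) field_differentiable (at t)" for t
  proof -
    obtain D where D: "(H has_derivative D) (at (upd z k t))" "\<forall>(c::complex) v. D (c *s v) = c * D v"
      using assms unfolding entire_several_def by blast
    have "((\<lambda>t. H (upd z k t)) has_derivative (\<lambda>h. D (h *s axis k 1))) (at t)"
      by (rule has_derivative_compose[OF upd_deriv D(1)])
    also have "(\<lambda>h. D (h *s axis k 1)) = (*) (D (axis k 1))"
      using D(2) by (auto simp: mult.commute)
    finally show ?thesis unfolding field_differentiable_def has_field_derivative_def by blast
  qed
  then show ?thesis by (simp add: holomorphic_on_def field_differentiable_at_within)
qed

lemma islimpt_real_interval: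
  assumes "a < c" "c < b"
  shows "complex_of_real c islimpt (complex_of_real ` {a<..<b})"
proof (rule islimpt_approachable[THEN iffD2], intro allI impI)
  fix e :: real assume e: "e > 0"
  define y where "y = c + min e (b - c) / 2"
  have "y \<in> {a<..<b}" using assms e by (auto simp: y_def min_def field_simps)
  moreover have "complex_of_real y \<noteq> complex_of_real c" using assms e by (auto simp: y_def min_def)
  moreover have "dist (complex_of_real y) (complex_of_real c) < e"
    using assms e by (auto simp: y_def min_def dist_complex_def norm_of_real abs_if simp flip: of_real_diff)
  ultimately show "\<exists>x'\<in>complex_of_real ` {a<..<b}. x' \<noteq> complex_of_real c \<and> dist x' (complex_of_real c) < e"
    by blast
qed

lemma vanish:
  fixes H :: "complex ^ 'd::finite \<Rightarrow> complex"
  assumes "entire_several H" "\<And>i. a i < b i"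
    "\<And>x. (\<forall>i. a i < x$i \<and> x$i < b i) \<Longrightarrow> H (cvec x) = 0"
  shows "H z = 0"
proof -
  have "\<forall>z. (\<forall>i. i \<notin> K \<longrightarrow> z$i \<in> complex_of_real ` {a i<..<b i}) \<longrightarrow> H z = 0"
    if "finite K" for K
    using that
  proof (induction K rule: finite_induct)
    case empty
    show ?case
    proof (intro allI impI)
      fix z :: "complex^'d" assume h: "\<forall>i. i \<notin> {} \<longrightarrow> z$i \<in> complex_of_real ` {a i<..<b i}"
      define x where "x = (\<chi> i. Re (z$i))"
      have "complex_of_real (Re (z$i)) = z$i" for i using h[rule_format, of i] by auto
      then have "cvec x = z" by (auto simp: cvec_def x_def vec_eq_iff)
      moreover have "a i < x$i \<and> x$i < b i" for i using h[rule_format, of i] by (auto simp: x_def)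
      ultimately show "H z = 0" using assms(3) by auto
    qed
  next
    case (insert k K)
    show ?case
    proof (intro allI impI)
      fix z :: "complex^'d" assume h: "\<forall>i. i \<notin> insert k K \<longrightarrow> z$i \<in> complex_of_real ` {a i<..<b i}"
      have hol: "(\<lambda>t. H (upd z k t)) holomorphic_on UNIV" by (rule slice_holo[OF assms(1)])
      have mid: "a k < (a k + b k)/2" "(a k + b k)/2 < b k" using assms(2)[of k] by auto
      have "H (upd z k t) = 0" for t
      proof (rule analytic_continuation[OF hol open_UNIV connected_UNIV subset_UNIV UNIV_I
            islimpt_real_interval[OF mid]])
        fix u assume u: "u \<in> complex_of_real ` {a k<..<b k}"
        show "H (upd z k u) = 0"
          using insert.IH[rule_format, of "upd z k u"] h u by (auto simp: upd_def)
      qed auto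
      moreover have "upd z k (z$k) = z" by (simp add: upd_def vec_eq_iff)
      ultimately show "H z = 0" by metis
    qed
  qed
  from this[of UNIV] show ?thesis by auto
qed

lemma dc_eq:
  fixes x y :: "real ^ ('d::{finite,linorder})"
  assumes "\<forall>i. i \<noteq> k \<longrightarrow> x$i = y$i"
  shows "delete_coord x k = delete_coord y k"
  unfolding delete_coord_def using assms by (intro map_cong) auto

lemma dc_len: "length (delete_coord (x :: real ^ ('d::{finite,linorder})) j) = CARD('d) - 1"
  by (simp add: delete_coord_def card_Diff_singleton)

theorem mainTheorem7:
  fixes F G :: "complex ^ ('d::{finite,linorder}) \<Rightarrow> complex"
    and \<phi> :: "'d \<Rightarrow> real list \<Rightarrow> complex"
  assumes "entire_several F" and "entire_several G"
    and "\<exists>z. F z \<noteq> 0" and "\<exists>z. G z \<noteq> 0"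
    and "\<And>j y. length y = CARD('d) - 1 \<Longrightarrow> \<phi> j y \<in> circle_T"
    and "\<And>j x. F (cvec x) = \<phi> j (delete_coord x j) * G (cvec x)"
  shows "\<exists>c\<in>circle_T. \<forall>z. F z = c * G z"
proof -
  have "\<exists>x0. G (cvec x0) \<noteq> 0"
  proof (rule ccontr)
    assume "\<not> ?thesis"
    then have "G z = 0" for z
      using vanish[OF assms(2), of "\<lambda>_. -1::real" "\<lambda>_. 1::real" z] by auto
    with assms(4) show False by auto
  qed
  then obtain x0 where x0: "G (cvec x0) \<noteq> 0" by blast
  have contc: "continuous (at x) cvec" for x :: "real^('d::{finite,linorder})"
  proof -
    have "continuous_on UNIV (\<lambda>x::real^('d::{finite,linorder}). \<chi> i. complex_of_real (x$i))"
      by (intro continuous_intros)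
    then show ?thesis unfolding cvec_def[abs_def] by (simp add: continuous_on_eq_continuous_at)
  qed
  have contG: "continuous (at z) G" for z
  proof -
    obtain D where "(G has_derivative D) (at z)" using assms(2) unfolding entire_several_def by blast
    then show ?thesis by (rule has_derivative_continuous)
  qed
  have cont: "continuous (at x0) (G \<circ> cvec)" by (rule continuous_at_compose[OF contc contG])
  obtain e where e: "e > 0" "\<forall>y. dist x0 y < e \<longrightarrow> (G \<circ> cvec) y \<noteq> 0"
    using continuous_at_avoid[OF cont, of 0] x0 by auto
  define \<delta> where "\<delta> = e / real (card (UNIV :: 'd set))"
  have dpos: "\<delta> > 0" using e by (simp add: \<delta>_def)
  define B where "B = {x. \<forall>i. x0$i - \<delta> < x$i \<and> x$i < x0$i + \<delta>}"
  have x0B: "x0 \<in> B" using dpos by (simp add: B_def)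
  have GB: "G (cvec x) \<noteq> 0" if "x \<in> B" for x
  proof -
    have "dist x0 x = norm (x0 - x)" by (simp add: dist_norm)
    also have "\<dots> \<le> (\<Sum>i\<in>UNIV. \<bar>(x0 - x)$i\<bar>)" by (rule norm_le_l1_cart)
    also have "\<dots> < (\<Sum>i\<in>(UNIV::'d set). \<delta>)"
    proof (intro sum_strict_mono)
      fix i :: 'd
      have "x0$i - \<delta> < x$i \<and> x$i < x0$i + \<delta>" using that by (simp add: B_def)
      then show "\<bar>(x0 - x)$i\<bar> < \<delta>" by (simp add: abs_less_iff)
    qed auto
    also have "\<dots> = e" by (simp add: \<delta>_def)
    finally show ?thesis using e by auto
  qed
  define q where "q x = F (cvec x) / G (cvec x)" for x
  have qphi: "q x = \<phi> k (delete_coord x k)" if "x \<in> B" for x k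
    using assms(6)[of x k] GB[OF that] by (simp add: q_def)
  have qstep: "q x = q y" if "x \<in> B" "y \<in> B" "\<forall>i. i \<noteq> k \<longrightarrow> x$i = y$i" for x y :: "real^('d::{finite,linorder})" and k
    using qphi[OF that(1), of k] qphi[OF that(2), of k] dc_eq[OF that(3)] by simp
  have "\<forall>x\<in>B. (\<forall>i. i \<notin> K \<longrightarrow> x$i = x0$i) \<longrightarrow> q x = q x0" if "finite K" for K
    using that
  proof (induction K rule: finite_induct)
    case empty
    then show ?case by (auto simp flip: vec_eq_iff)
  next
    case (insert k K)
    show ?case
    proof (intro ballI impI)
      fix x assume xB: "x \<in> B" and h: "\<forall>i. i \<notin> insert k K \<longrightarrow> x$i = x0$i"
      define x' where "x' = (\<chi> i. if i = k then x0$i else x$i)"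
      have x'B: "x' \<in> B" using xB x0B by (auto simp: B_def x'_def)
      have "q x' = q x0" using insert.IH x'B h by (auto simp: x'_def)
      moreover have "q x = q x'" by (rule qstep[OF xB x'B, of k]) (simp add: x'_def)
      ultimately show "q x = q x0" by simp
    qed
  qed
  from this[of UNIV] have qc: "\<forall>x\<in>B. q x = q x0" by simp
  define c where "c = q x0"
  have cT: "c \<in> circle_T"
    using qphi[OF x0B, of undefined] assms(5)[OF dc_len] by (simp add: c_def)
  have entH: "entire_several (\<lambda>z. F z - c * G z)"
    unfolding entire_several_def
  proof
    fix z
    obtain D1 where D1: "(F has_derivative D1) (at z)" "\<forall>(a::complex) v. D1 (a *s v) = a * D1 v"
      using assms(1) unfolding entire_several_def by blast
    obtain D2 where D2: "(G has_derivative D2) (at z)" "\<forall>(a::complex) v. D2 (a *s v) = a * D2 v"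
      using assms(2) unfolding entire_several_def by blast
    have "((\<lambda>z. F z - c * G z) has_derivative (\<lambda>v. D1 v - c * D2 v)) (at z)"
      by (intro derivative_intros D1(1) D2(1))
    moreover have "\<forall>(a::complex) v. D1 (a *s v) - c * D2 (a *s v) = a * (D1 v - c * D2 v)"
      using D1(2) D2(2) by (simp add: algebra_simps)
    ultimately show "\<exists>D. ((\<lambda>z. F z - c * G z) has_derivative D) (at z) \<and>
        (\<forall>(a::complex) v. D (a *s v) = a * D v)" by blast
  qed
  have "F z - c * G z = 0" for z
  proof (rule vanish[OF entH, of "\<lambda>i. x0$i - \<delta>" "\<lambda>i. x0$i + \<delta>"])
    show "x0$i - \<delta> < x0$i + \<delta>" for i using dpos by simp
    fix x assume "\<forall>i. x0$i - \<delta> < x$i \<and> x$i < x0$i + \<delta>"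
    then have xB: "x \<in> B" by (simp add: B_def)
    then have "q x = c" using qc by (simp add: c_def)
    then show "F (cvec x) - c * G (cvec x) = 0" using GB[OF xB] by (simp add: q_def field_simps)
  qed
  then show ?thesis using cT by auto
qed

end
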